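(* Let $k$ be a commutative associative unital ring, $R$ a commutative associative unital $k$-algebra and $B$ an $R$-algebra. Assume $\beta\in\mathrm{IBF}_{(R,k)}(B)$ is nonsingular. Then $\mathrm{Cent}_R(B)\cong\mathrm{IBF}_{(R,k)}(B)$ as $R$-modules. If furthermore $B$ is a central $R$-algebra, then $\mathrm{IBF}_{(R,k)}(B)$ is a free $R$-module of rank $1$ with basis $\beta$: $\mathrm{IBF}_{(R,k)}(B)=R\beta\cong R$.
   Context: An $R$-algebra is an $R$-module with an $R$-bilinear product (no identities assumed). A $k$-bilinear map $\beta\colon B\times B\to k$ is $(R,k)$-bilinear if $\beta(rb_1,b_2)=\beta(b_1,rb_2)$ for $r\in R$; it is invariant if $\beta(ab,c)=\beta(a,bc)=\beta(b,ca)$. $\mathrm{IBF}_{(R,k)}(B)$ is the $R$-module of invariant $(R,k)$-bilinear maps $B\times B\to k$, with $(r\beta)(b_1,b_2)=\beta(rb_1,b_2)$. $\beta$ is nonsingular if the $R$-linear map $B\to B^*=\mathrm{Hom}_k(B,k)$, $b\mapsto\beta(b,-)$, is bijective (where $(r\varphi)(b)=\varphi(rb)$). $\mathrm{Cent}_R(B)=\{\chi\in\mathrm{End}_R(B):\chi(ab)=a\chi(b)=\chi(a)b\}$; $B$ is central if $R\to\mathrm{Cent}_R(B)$, $r\mapsto(b\mapsto rb)$, is an isomorphism. *)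

theory Defs
  imports Main "HOL.Modules"
begin

text \<open>k, R commutative unital rings (types 'k, 'r); alg : k \<Rightarrow> R the structure map
  making R a k-algebra; sm : the R-module structure on B (type 'b); mul : the product of B.
  k acts on B through alg.\<close>

definition unital_ring_hom :: "('k::comm_ring_1 \<Rightarrow> 'r::comm_ring_1) \<Rightarrow> bool" where
  "unital_ring_hom alg \<longleftrightarrow> alg 1 = 1 \<and> (\<forall>a b. alg (a + b) = alg a + alg b \<and> alg (a * b) = alg a * alg b)"

definition R_algebra :: "('r::comm_ring_1 \<Rightarrow> 'b::ab_group_add \<Rightarrow> 'b) \<Rightarrow> ('b \<Rightarrow> 'b \<Rightarrow> 'b) \<Rightarrow> bool" where
  "R_algebra sm mul \<longleftrightarrow> module sm \<and>
     (\<forall>x y z. mul (x + y) z = mul x z + mul y z \<and> mul x (y + z) = mul x y + mul x z) \<and>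
     (\<forall>r x y. mul (sm r x) y = sm r (mul x y) \<and> mul x (sm r y) = sm r (mul x y))"

definition k_bilinear :: "('k::comm_ring_1 \<Rightarrow> 'r::comm_ring_1) \<Rightarrow> ('r \<Rightarrow> 'b::ab_group_add \<Rightarrow> 'b) \<Rightarrow> ('b \<Rightarrow> 'b \<Rightarrow> 'k) \<Rightarrow> bool" where
  "k_bilinear alg sm \<beta> \<longleftrightarrow>
     (\<forall>x y z. \<beta> (x + y) z = \<beta> x z + \<beta> y z \<and> \<beta> x (y + z) = \<beta> x y + \<beta> x z) \<and>
     (\<forall>c x y. \<beta> (sm (alg c) x) y = c * \<beta> x y \<and> \<beta> x (sm (alg c) y) = c * \<beta> x y)"

definition Rk_bilinear :: "('k::comm_ring_1 \<Rightarrow> 'r::comm_ring_1) \<Rightarrow> ('r \<Rightarrow> 'b::ab_group_add \<Rightarrow> 'b) \<Rightarrow> ('b \<Rightarrow> 'b \<Rightarrow> 'k) \<Rightarrow> bool" where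
  "Rk_bilinear alg sm \<beta> \<longleftrightarrow> k_bilinear alg sm \<beta> \<and> (\<forall>r x y. \<beta> (sm r x) y = \<beta> x (sm r y))"

definition invariant_form :: "('b \<Rightarrow> 'b \<Rightarrow> 'b) \<Rightarrow> ('b \<Rightarrow> 'b \<Rightarrow> 'k) \<Rightarrow> bool" where
  "invariant_form mul \<beta> \<longleftrightarrow> (\<forall>a b c. \<beta> (mul a b) c = \<beta> a (mul b c) \<and> \<beta> a (mul b c) = \<beta> b (mul c a))"

definition IBF :: "('k::comm_ring_1 \<Rightarrow> 'r::comm_ring_1) \<Rightarrow> ('r \<Rightarrow> 'b::ab_group_add \<Rightarrow> 'b) \<Rightarrow> ('b \<Rightarrow> 'b \<Rightarrow> 'b) \<Rightarrow> ('b \<Rightarrow> 'b \<Rightarrow> 'k) set" where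
  "IBF alg sm mul = {\<beta>. Rk_bilinear alg sm \<beta> \<and> invariant_form mul \<beta>}"

definition ibf_scale :: "('r \<Rightarrow> 'b \<Rightarrow> 'b) \<Rightarrow> 'r \<Rightarrow> ('b \<Rightarrow> 'b \<Rightarrow> 'k) \<Rightarrow> ('b \<Rightarrow> 'b \<Rightarrow> 'k)" where
  "ibf_scale sm r \<beta> = (\<lambda>x y. \<beta> (sm r x) y)"

definition kdual :: "('k::comm_ring_1 \<Rightarrow> 'r::comm_ring_1) \<Rightarrow> ('r \<Rightarrow> 'b::ab_group_add \<Rightarrow> 'b) \<Rightarrow> ('b \<Rightarrow> 'k) set" where
  "kdual alg sm = {\<phi>. (\<forall>x y. \<phi> (x + y) = \<phi> x + \<phi> y) \<and> (\<forall>c x. \<phi> (sm (alg c) x) = c * \<phi> x)}"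

definition nonsingular :: "('k::comm_ring_1 \<Rightarrow> 'r::comm_ring_1) \<Rightarrow> ('r \<Rightarrow> 'b::ab_group_add \<Rightarrow> 'b) \<Rightarrow> ('b \<Rightarrow> 'b \<Rightarrow> 'k) \<Rightarrow> bool" where
  "nonsingular alg sm \<beta> \<longleftrightarrow> bij_betw (\<lambda>b. \<beta> b) UNIV (kdual alg sm)"

definition Cent :: "('r::comm_ring_1 \<Rightarrow> 'b::ab_group_add \<Rightarrow> 'b) \<Rightarrow> ('b \<Rightarrow> 'b \<Rightarrow> 'b) \<Rightarrow> ('b \<Rightarrow> 'b) set" where
  "Cent sm mul = {\<chi>. (\<forall>x y. \<chi> (x + y) = \<chi> x + \<chi> y) \<and> (\<forall>r x. \<chi> (sm r x) = sm r (\<chi> x)) \<and>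
      (\<forall>a b. \<chi> (mul a b) = mul a (\<chi> b) \<and> mul a (\<chi> b) = mul (\<chi> a) b)}"

text \<open>Central: r \<mapsto> (b \<mapsto> rb) is an isomorphism R \<rightarrow> Cent_R(B) (it is always R-linear,
  so this amounts to bijectivity onto Cent_R(B)).\<close>
definition central :: "('r::comm_ring_1 \<Rightarrow> 'b::ab_group_add \<Rightarrow> 'b) \<Rightarrow> ('b \<Rightarrow> 'b \<Rightarrow> 'b) \<Rightarrow> bool" where
  "central sm mul \<longleftrightarrow> bij_betw (\<lambda>r b. sm r b) UNIV (Cent sm mul)"

end

theory Submission
  imports Defs
begin

theorem corollary3p8:
  fixes alg :: "'k::comm_ring_1 \<Rightarrow> 'r::comm_ring_1"
    and sm :: "'r \<Rightarrow> 'b::ab_group_add \<Rightarrow> 'b"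
    and mul :: "'b \<Rightarrow> 'b \<Rightarrow> 'b"
    and \<beta> :: "'b \<Rightarrow> 'b \<Rightarrow> 'k"
  assumes "unital_ring_hom alg"
    and "R_algebra sm mul"
    and "\<beta> \<in> IBF alg sm mul"
    and "nonsingular alg sm \<beta>"
  shows "(\<exists>f. bij_betw f (Cent sm mul) (IBF alg sm mul) \<and>
            (\<forall>\<chi>1\<in>Cent sm mul. \<forall>\<chi>2\<in>Cent sm mul.
               f (\<lambda>x. \<chi>1 x + \<chi>2 x) = (\<lambda>x y. f \<chi>1 x y + f \<chi>2 x y)) \<and>
            (\<forall>r. \<forall>\<chi>\<in>Cent sm mul. f (\<lambda>x. sm r (\<chi> x)) = ibf_scale sm r (f \<chi>)))
       \<and> (central sm mul \<longrightarrow>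
            IBF alg sm mul = range (\<lambda>r. ibf_scale sm r \<beta>) \<and>
            bij_betw (\<lambda>r. ibf_scale sm r \<beta>) UNIV (IBF alg sm mul))"
proof -
  have alg: "R_algebra sm mul" by fact
  have mod: "module sm" using alg unfolding R_algebra_def by blast
  have mr: "\<And>r x y. mul (sm r x) y = sm r (mul x y)" "\<And>r x y. mul x (sm r y) = sm r (mul x y)"
    using alg unfolding R_algebra_def by blast+
  have bA: "\<And>x y z. \<beta> (x + y) z = \<beta> x z + \<beta> y z"
    "\<And>x y z. \<beta> x (y + z) = \<beta> x y + \<beta> x z"
    "\<And>c x y. \<beta> (sm (alg c) x) y = c * \<beta> x y"
    "\<And>c x y. \<beta> x (sm (alg c) y) = c * \<beta> x y"
    "\<And>r x y. \<beta> (sm r x) y = \<beta> x (sm r y)"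
    using assms(3) unfolding IBF_def Rk_bilinear_def k_bilinear_def by blast+
  have bI: "\<And>a b c. \<beta> (mul a b) c = \<beta> a (mul b c)" "\<And>a b c. \<beta> a (mul b c) = \<beta> b (mul c a)"
    using assms(3) unfolding IBF_def invariant_form_def by blast+
  have bsym: "\<And>x y z. \<beta> x (mul y z) = \<beta> (mul y z) x"
    by (metis bI)
  have bij: "bij_betw (\<lambda>b. \<beta> b) UNIV (kdual alg sm)"
    using assms(4) unfolding nonsingular_def by simp
  have binj: "\<And>x y. \<beta> x = \<beta> y \<Longrightarrow> x = y"
    using bij unfolding bij_betw_def inj_on_def by blast
  define f where "f = (\<lambda>(\<chi>::'b\<Rightarrow>'b) x y. \<beta> (\<chi> x) y)"
  have fIBF: "f \<chi> \<in> IBF alg sm mul" if c: "\<chi> \<in> Cent sm mul" for \<chi>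
  proof -
    have cA: "\<And>x y. \<chi> (x + y) = \<chi> x + \<chi> y" "\<And>r x. \<chi> (sm r x) = sm r (\<chi> x)"
      "\<And>a b. \<chi> (mul a b) = mul a (\<chi> b)" "\<And>a b. mul a (\<chi> b) = mul (\<chi> a) b"
      using c unfolding Cent_def by blast+
    have inv1: "\<And>a b c. \<beta> (\<chi> (mul a b)) c = \<beta> (\<chi> a) (mul b c)"
      by (metis cA(3,4) bI(1))
    have inv2: "\<And>a b c. \<beta> (\<chi> a) (mul b c) = \<beta> (\<chi> b) (mul c a)"
    proof -
      fix a b c
      have "\<beta> (\<chi> a) (mul b c) = \<beta> b (mul c (\<chi> a))" by (rule bI(2))
      also have "\<dots> = \<beta> b (\<chi> (mul c a))" by (simp add: cA(3,4))
      also have "\<dots> = \<beta> (\<chi> (mul c a)) b" using bsym cA(3) by metis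
      also have "\<dots> = \<beta> (mul c (\<chi> a)) b" by (simp add: cA(3,4))
      also have "\<dots> = \<beta> c (mul (\<chi> a) b)" by (rule bI(1))
      also have "\<dots> = \<beta> c (mul a (\<chi> b))" by (simp add: cA(4))
      also have "\<dots> = \<beta> (\<chi> b) (mul c a)" by (metis bI(2))
      finally show "\<beta> (\<chi> a) (mul b c) = \<beta> (\<chi> b) (mul c a)" .
    qed
    show ?thesis
      unfolding IBF_def Rk_bilinear_def k_bilinear_def invariant_form_def f_def
      using inv1 inv2 by (auto simp: cA(1,2) bA)
  qed
  have finj: "inj_on f (Cent sm mul)"
  proof (rule inj_onI)
    fix \<chi>1 \<chi>2 assume "\<chi>1 \<in> Cent sm mul" "\<chi>2 \<in> Cent sm mul" "f \<chi>1 = f \<chi>2"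
    then have "\<And>x. \<beta> (\<chi>1 x) = \<beta> (\<chi>2 x)" unfolding f_def by metis
    then show "\<chi>1 = \<chi>2" using binj by blast
  qed
  have fsurj: "\<gamma> \<in> f ` Cent sm mul" if g: "\<gamma> \<in> IBF alg sm mul" for \<gamma>
  proof -
    have gA: "\<And>x y z. \<gamma> (x + y) z = \<gamma> x z + \<gamma> y z"
      "\<And>x y z. \<gamma> x (y + z) = \<gamma> x y + \<gamma> x z"
      "\<And>c x y. \<gamma> (sm (alg c) x) y = c * \<gamma> x y"
      "\<And>c x y. \<gamma> x (sm (alg c) y) = c * \<gamma> x y"
      "\<And>r x y. \<gamma> (sm r x) y = \<gamma> x (sm r y)"
      using g unfolding IBF_def Rk_bilinear_def k_bilinear_def by blast+
    have gI: "\<And>a b c. \<gamma> (mul a b) c = \<gamma> a (mul b c)" "\<And>a b c. \<gamma> a (mul b c) = \<gamma> b (mul c a)"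
      using g unfolding IBF_def invariant_form_def by blast+
    have "\<And>x. \<gamma> x \<in> kdual alg sm" unfolding kdual_def using gA by auto
    then have "\<And>x. \<exists>b. \<beta> b = \<gamma> x" using bij unfolding bij_betw_def by (metis imageE)
    then obtain \<chi> where ch: "\<And>x. \<beta> (\<chi> x) = \<gamma> x" by metis
    have c1: "\<chi> (x + y) = \<chi> x + \<chi> y" for x y
      by (rule binj) (auto simp: ch bA gA)
    have c2: "\<chi> (sm r x) = sm r (\<chi> x)" for r x
      by (rule binj) (auto simp: ch bA gA)
    have c3: "\<chi> (mul a b) = mul a (\<chi> b)" for a b
    proof (rule binj, rule ext)
      fix c
      have "\<beta> (mul a (\<chi> b)) c = \<beta> a (mul (\<chi> b) c)" by (rule bI(1))
      also have "\<dots> = \<beta> (\<chi> b) (mul c a)" by (rule bI(2))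
      also have "\<dots> = \<gamma> b (mul c a)" by (simp add: ch)
      also have "\<dots> = \<gamma> (mul a b) c" by (metis gI)
      finally show "\<beta> (\<chi> (mul a b)) c = \<beta> (mul a (\<chi> b)) c" by (simp add: ch)
    qed
    have c4: "\<chi> (mul a b) = mul (\<chi> a) b" for a b
    proof (rule binj, rule ext)
      fix c
      have "\<beta> (mul (\<chi> a) b) c = \<beta> (\<chi> a) (mul b c)" by (rule bI(1))
      also have "\<dots> = \<gamma> a (mul b c)" by (simp add: ch)
      also have "\<dots> = \<gamma> (mul a b) c" by (metis gI)
      finally show "\<beta> (\<chi> (mul a b)) c = \<beta> (mul (\<chi> a) b) c" by (simp add: ch)
    qed
    have "\<chi> \<in> Cent sm mul" unfolding Cent_def using c1 c2 c3 c4 by auto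
    moreover have "f \<chi> = \<gamma>" unfolding f_def using ch by auto
    ultimately show ?thesis by blast
  qed
  have fbij: "bij_betw f (Cent sm mul) (IBF alg sm mul)"
    unfolding bij_betw_def using finj fIBF fsurj by blast
  have fadd: "\<forall>\<chi>1\<in>Cent sm mul. \<forall>\<chi>2\<in>Cent sm mul.
               f (\<lambda>x. \<chi>1 x + \<chi>2 x) = (\<lambda>x y. f \<chi>1 x y + f \<chi>2 x y)"
    unfolding f_def by (simp add: bA fun_eq_iff)
  have fsc: "\<forall>r. \<forall>\<chi>\<in>Cent sm mul. f (\<lambda>x. sm r (\<chi> x)) = ibf_scale sm r (f \<chi>)"
    unfolding f_def ibf_scale_def Cent_def by auto
  have part2: "IBF alg sm mul = range (\<lambda>r. ibf_scale sm r \<beta>) \<and>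
            bij_betw (\<lambda>r. ibf_scale sm r \<beta>) UNIV (IBF alg sm mul)" if cen: "central sm mul"
  proof -
    have cb: "bij_betw (\<lambda>r b. sm r b) UNIV (Cent sm mul)" using cen unfolding central_def by simp
    have fe: "ibf_scale sm r \<beta> = f (\<lambda>b. sm r b)" for r
      unfolding ibf_scale_def f_def by simp
    have eq: "(\<lambda>r. ibf_scale sm r \<beta>) = f \<circ> (\<lambda>r b. sm r b)" using fe by (auto simp: fun_eq_iff)
    have "bij_betw (f \<circ> (\<lambda>r b. sm r b)) UNIV (IBF alg sm mul)"
      using bij_betw_trans[OF cb fbij] .
    then show ?thesis unfolding eq bij_betw_def by auto
  qed
  show ?thesis using fbij fadd fsc part2 by blast
qed

end
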